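(* Let $n\ge 2$. Every element $\pi\in D_n$ has a unique presentation of the form $$\pi = w_{1}^{j_{1}} \cdot t_{2}^{i_{2}} \cdot w_{2}^{j_{2}} \cdot t_{3}^{i_{3}} \cdots w_{n-1}^{j_{n-1}} \cdot t_{n}^{i_{n}},$$ where $0\le i_k\le k-1$ for $2\le k\le n$ and $0\le j_k\le 1$ for $1\le k\le n-1$.
   Context: $D_n$ ($n\ge 2$) is the Coxeter group with generators $s_{1'},s_1,\dots,s_{n-1}$ and relations $s^2=1$ for each generator, $(s_i s_{i+1})^3=1$, $(s_is_j)^2=1$ for $|i-j|\ge 2$ ($1\le i,j\le n-1$), $(s_{1'}s_2)^3=1$, and $(s_{1'}s_i)^2=1$ for $1\le i\le n-1$, $i\ne 2$. For $2\le k\le n$ put $t_k=s_1\cdot s_2\cdots s_{k-1}$, and for $1\le k\le n-1$ put $w_k=s_k\cdot s_{k-1}\cdots s_2\cdot s_1\cdot s_{1'}\cdot s_2\cdots s_k$ (so $w_1=s_1s_{1'}$). *)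

theory Defs
  imports Main
begin

text \<open>Generators of D_n: Gp is s_{1'}, G i is s_i (1 <= i <= n-1).
  Elements of D_n are represented by words over the generators modulo the
  congruence generated by the Coxeter relations.\<close>

datatype gen = Gp | G nat

definition valid_gen :: "nat \<Rightarrow> gen \<Rightarrow> bool" where
  "valid_gen n g = (case g of Gp \<Rightarrow> True | G i \<Rightarrow> 1 \<le> i \<and> i \<le> n - 1)"

definition valid_word :: "nat \<Rightarrow> gen list \<Rightarrow> bool" where
  "valid_word n w = (\<forall>g\<in>set w. valid_gen n g)"

definition wpow :: "gen list \<Rightarrow> nat \<Rightarrow> gen list" where
  "wpow w m = concat (replicate m w)"

definition Dn_rels :: "nat \<Rightarrow> gen list set" where
  "Dn_rels n =
     {[g, g] | g. valid_gen n g}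
   \<union> {wpow [G i, G (i+1)] 3 | i. 1 \<le> i \<and> i + 1 \<le> n - 1}
   \<union> {wpow [G i, G j] 2 | i j. 1 \<le> i \<and> i \<le> n - 1 \<and> 1 \<le> j \<and> j \<le> n - 1
                              \<and> (i + 2 \<le> j \<or> j + 2 \<le> i)}
   \<union> {wpow [Gp, G 2] 3 | u::unit. 2 \<le> n - 1}
   \<union> {wpow [Gp, G i] 2 | i. 1 \<le> i \<and> i \<le> n - 1 \<and> i \<noteq> 2}"

inductive Dn_eq :: "nat \<Rightarrow> gen list \<Rightarrow> gen list \<Rightarrow> bool" for n where
  refl: "Dn_eq n u u"
| sym: "Dn_eq n u v \<Longrightarrow> Dn_eq n v u"
| trans: "Dn_eq n u v \<Longrightarrow> Dn_eq n v x \<Longrightarrow> Dn_eq n u x"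
| ctxt: "Dn_eq n u v \<Longrightarrow> Dn_eq n (a @ u @ b) (a @ v @ b)"
| rel: "r \<in> Dn_rels n \<Longrightarrow> Dn_eq n r []"

definition t_word :: "nat \<Rightarrow> gen list" where
  "t_word k = map G [1..<k]"

definition w_word :: "nat \<Rightarrow> gen list" where
  "w_word k = map G (rev [2..<k+1]) @ [G 1, Gp] @ map G [2..<k+1]"

text \<open>Normal form w_1^{j_1} t_2^{i_2} w_2^{j_2} ... w_{n-1}^{j_{n-1}} t_n^{i_n},
  with ii ! k = i_{k+2} and jj ! k = j_{k+1} for k < n-1.\<close>
definition nf_word :: "nat \<Rightarrow> nat list \<Rightarrow> nat list \<Rightarrow> gen list" where
  "nf_word n ii jj =
     concat (map (\<lambda>k. wpow (w_word (k+1)) (jj ! k) @ wpow (t_word (k+2)) (ii ! k)) [0..<n-1])"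

end

theory Submission
  imports Defs
begin

declare Dn_eq.trans[trans]

lemma ctxL: "Dn_eq n u v \<Longrightarrow> Dn_eq n (u @ b) (v @ b)"
  using Dn_eq.ctxt[of n u v "[]" b] by simp
lemma ctxR: "Dn_eq n u v \<Longrightarrow> Dn_eq n (a @ u) (a @ v)"
  using Dn_eq.ctxt[of n u v a "[]"] by simp
lemma eq_app: "Dn_eq n u u' \<Longrightarrow> Dn_eq n v v' \<Longrightarrow> Dn_eq n (u@v) (u'@v')"
  by (meson Dn_eq.trans ctxL ctxR)

lemma wpow2: "wpow [a,b] 2 = [a,b,a,b]" by (simp add: wpow_def numeral_2_eq_2)
lemma wpow3: "wpow [a,b] 3 = [a,b,a,b,a,b]" by (simp add: wpow_def numeral_3_eq_3)
lemma wpow_Suc: "wpow w (Suc i) = w @ wpow w i" by (simp add: wpow_def)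
lemma wpow_0: "wpow w 0 = []" by (simp add: wpow_def)
lemma set_wpow: "set (wpow w i) \<subseteq> set w" by (auto simp: wpow_def)

lemma rel_gg: "valid_gen n g \<Longrightarrow> Dn_eq n [g,g] []"
  by (rule Dn_eq.rel) (unfold Dn_rels_def, (rule UnI1)+, blast)

lemma cancel: "valid_gen n g \<Longrightarrow> Dn_eq n (a @ [g,g] @ b) (a @ b)"
  using Dn_eq.ctxt[OF rel_gg] by fastforce

lemma rev_cancel: "valid_word n v \<Longrightarrow> Dn_eq n (v @ rev v) []"
proof (induction v)
  case Nil then show ?case by (simp add: Dn_eq.refl)
next
  case (Cons g v)
  have vg: "valid_gen n g" and vv: "valid_word n v" using Cons.prems by (auto simp: valid_word_def)
  have "Dn_eq n ((g # v) @ rev (g # v)) ([g] @ (v @ rev v) @ [g])" by (simp add: Dn_eq.refl)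
  also have "Dn_eq n ... ([g] @ [] @ [g])" by (rule Dn_eq.ctxt) (rule Cons.IH[OF vv])
  also have "... = [] @ [g,g] @ []" by simp
  also have "Dn_eq n ... ([] @ [])" by (rule cancel[OF vg])
  finally show ?case by simp
qed

lemma valid_rev: "valid_word n v \<Longrightarrow> valid_word n (rev v)" by (simp add: valid_word_def)

lemma rel_to_eq: assumes "valid_word n v" "Dn_eq n (u @ rev v) []" shows "Dn_eq n u v"
proof -
  have "Dn_eq n (rev v @ v) []" using rev_cancel[OF valid_rev[OF assms(1)]] by simp
  hence "Dn_eq n (u @ []) (u @ (rev v @ v))" using ctxR[of n "[]" "rev v @ v" u] Dn_eq.sym by blast
  also have "... = (u @ rev v) @ v" by simp
  also have "Dn_eq n ... ([] @ v)" by (rule ctxL[OF assms(2)])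
  finally show ?thesis by simp
qed

lemma vG: "valid_gen n (G i) = (1 \<le> i \<and> i \<le> n - 1)" by (simp add: valid_gen_def)
lemma vP: "valid_gen n Gp" by (simp add: valid_gen_def)

lemma comm_GG: assumes "1 \<le> i" "i \<le> n - 1" "1 \<le> j" "j \<le> n - 1" "i + 2 \<le> j \<or> j + 2 \<le> i"
  shows "Dn_eq n [G i, G j] [G j, G i]"
proof (rule rel_to_eq)
  show "valid_word n [G j, G i]" using assms by (simp add: valid_word_def vG)
  have "wpow [G i, G j] 2 \<in> Dn_rels n" unfolding Dn_rels_def by (rule UnI1, rule UnI1, rule UnI2, rule CollectI, rule exI[of _ i], rule exI[of _ j]) (use assms in simp)
  thus "Dn_eq n ([G i, G j] @ rev [G j, G i]) []" using Dn_eq.rel by (simp add: wpow2)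
qed

lemma braid_GG: assumes "1 \<le> i" "i + 1 \<le> n - 1"
  shows "Dn_eq n [G i, G (i+1), G i] [G (i+1), G i, G (i+1)]"
proof (rule rel_to_eq)
  show "valid_word n [G (i+1), G i, G (i+1)]" using assms by (simp add: valid_word_def vG)
  have "wpow [G i, G (i+1)] 3 \<in> Dn_rels n" unfolding Dn_rels_def by (rule UnI1, rule UnI1, rule UnI1, rule UnI2, rule CollectI, rule exI[of _ i]) (use assms in simp)
  thus "Dn_eq n ([G i, G (i+1), G i] @ rev [G (i+1), G i, G (i+1)]) []" using Dn_eq.rel by (simp add: wpow3)
qed

lemma comm_pG: assumes "1 \<le> i" "i \<le> n - 1" "i \<noteq> 2"
  shows "Dn_eq n [Gp, G i] [G i, Gp]"
proof (rule rel_to_eq)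
  show "valid_word n [G i, Gp]" using assms by (simp add: valid_word_def vG vP)
  have "wpow [Gp, G i] 2 \<in> Dn_rels n" unfolding Dn_rels_def by (rule UnI2, rule CollectI, rule exI[of _ i]) (use assms in simp)
  thus "Dn_eq n ([Gp, G i] @ rev [G i, Gp]) []" using Dn_eq.rel by (simp add: wpow2)
qed

lemma braid_pG: assumes "2 \<le> n - 1"
  shows "Dn_eq n [Gp, G 2, Gp] [G 2, Gp, G 2]"
proof (rule rel_to_eq)
  show "valid_word n [G 2, Gp, G 2]" using assms by (simp add: valid_word_def vG vP)
  have "wpow [Gp, G 2] 3 \<in> Dn_rels n" unfolding Dn_rels_def by (rule UnI1, rule UnI2, rule CollectI, rule exI[of _ "()"]) (use assms in simp)
  thus "Dn_eq n ([Gp, G 2, Gp] @ rev [G 2, Gp, G 2]) []" using Dn_eq.rel by (simp add: wpow3)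
qed

lemma comm_word: "(\<forall>x\<in>set u. Dn_eq n [g, x] [x, g]) \<Longrightarrow> Dn_eq n ([g] @ u) (u @ [g])"
proof (induction u)
  case Nil then show ?case by (simp add: Dn_eq.refl)
next
  case (Cons x u)
  have "[g] @ x # u = [g, x] @ u" by simp
  also have "Dn_eq n ... ([x, g] @ u)" using Cons.prems by (intro ctxL) simp
  also have "... = [x] @ ([g] @ u)" by simp
  also have "Dn_eq n ... ([x] @ (u @ [g]))" using Cons by (intro ctxR) simp
  finally show ?case by simp
qed

lemma comm_word': "(\<forall>x\<in>set u. Dn_eq n [g, x] [x, g]) \<Longrightarrow> Dn_eq n (u @ [g]) ([g] @ u)"
  using comm_word Dn_eq.sym by blast


definition up :: "nat \<Rightarrow> nat \<Rightarrow> gen list" where "up a b = map G [a..<b]"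
definition dn :: "nat \<Rightarrow> nat \<Rightarrow> gen list" where "dn a b = map G (rev [a..<b])"

lemma upt_split: "a \<le> c \<Longrightarrow> c \<le> b \<Longrightarrow> [a..<b] = [a..<c] @ [c..<b]"
  using upt_add_eq_append[of a c "b - c"] by simp
lemma up_split: "a \<le> c \<Longrightarrow> c \<le> b \<Longrightarrow> up a b = up a c @ up c b"
  by (simp add: up_def upt_split[of a c b])
lemma dn_split: "a \<le> c \<Longrightarrow> c \<le> b \<Longrightarrow> dn a b = dn c b @ dn a c"
  by (simp add: dn_def upt_split[of a c b])
lemma up_snoc: "a \<le> b \<Longrightarrow> up a (Suc b) = up a b @ [G b]" by (simp add: up_def)
lemma up_cons: "a < b \<Longrightarrow> up a b = G a # up (Suc a) b" by (simp add: up_def upt_conv_Cons)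
lemma dn_snoc: "a < b \<Longrightarrow> dn a b = dn (Suc a) b @ [G a]" by (simp add: dn_def upt_conv_Cons)
lemma dn_cons: "a \<le> b \<Longrightarrow> dn a (Suc b) = G b # dn a b" by (simp add: dn_def)
lemma up_empty: "up a a = []" by (simp add: up_def)
lemma dn_empty: "dn a a = []" by (simp add: dn_def)
lemma set_up: "set (up a b) = G ` {a..<b}" by (simp add: up_def)
lemma set_dn: "set (dn a b) = G ` {a..<b}" by (simp add: dn_def)

lemma L2: assumes "1 \<le> a" "a \<le> i" "Suc i < b" "b \<le> n"
  shows "Dn_eq n (dn a b @ [G (Suc i)]) ([G i] @ dn a b)"
proof -
  have d: "dn a b = dn (i+2) b @ [G (Suc i), G i] @ dn a i"
  proof -
    have "dn a b = dn (i+2) b @ dn a (i+2)" using assms by (intro dn_split) auto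
    moreover have "dn a (i+2) = G (Suc i) # G i # dn a i" using assms by (simp add: dn_cons)
    ultimately show ?thesis by simp
  qed
  have "dn a b @ [G (Suc i)] = dn (i+2) b @ [G (Suc i), G i] @ (dn a i @ [G (Suc i)])" using d by simp
  also have "Dn_eq n ... (dn (i+2) b @ [G (Suc i), G i] @ ([G (Suc i)] @ dn a i))"
    by (rule ctxR, rule ctxR, rule comm_word') (use assms in \<open>auto simp: set_dn intro!: comm_GG\<close>)
  also have "... = dn (i+2) b @ [G (Suc i), G i, G (Suc i)] @ dn a i" by simp
  also have "Dn_eq n ... (dn (i+2) b @ [G i, G (Suc i), G i] @ dn a i)"
    by (rule Dn_eq.ctxt, rule Dn_eq.sym) (use braid_GG[of i n] assms in simp)
  also have "... = (dn (i+2) b @ [G i]) @ [G (Suc i), G i] @ dn a i" by simp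
  also have "Dn_eq n ... (([G i] @ dn (i+2) b) @ [G (Suc i), G i] @ dn a i)"
    by (rule ctxL, rule comm_word') (use assms in \<open>auto simp: set_dn intro!: comm_GG\<close>)
  also have "... = [G i] @ dn a b" using d by simp
  finally show ?thesis .
qed

lemma L3: assumes "1 \<le> a" "a \<le> j" "Suc j < b" "b \<le> n"
  shows "Dn_eq n (up a b @ [G j]) ([G (Suc j)] @ up a b)"
proof -
  have d: "up a b = up a j @ [G j, G (Suc j)] @ up (j+2) b"
  proof -
    have "up a b = up a j @ up j b" using assms by (intro up_split) auto
    moreover have "up j b = G j # G (Suc j) # up (j+2) b" using assms by (simp add: up_cons)
    ultimately show ?thesis by simp
  qed
  have "up a b @ [G j] = up a j @ [G j, G (Suc j)] @ (up (j+2) b @ [G j])" using d by simp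
  also have "Dn_eq n ... (up a j @ [G j, G (Suc j)] @ ([G j] @ up (j+2) b))"
    by (rule ctxR, rule ctxR, rule comm_word') (use assms in \<open>auto simp: set_up intro!: comm_GG\<close>)
  also have "... = up a j @ [G j, G (Suc j), G j] @ up (j+2) b" by simp
  also have "Dn_eq n ... (up a j @ [G (Suc j), G j, G (Suc j)] @ up (j+2) b)"
    by (rule Dn_eq.ctxt) (use braid_GG[of j n] assms in simp)
  also have "... = (up a j @ [G (Suc j)]) @ [G j, G (Suc j)] @ up (j+2) b" by simp
  also have "Dn_eq n ... (([G (Suc j)] @ up a j) @ [G j, G (Suc j)] @ up (j+2) b)"
    by (rule ctxL, rule comm_word') (use assms in \<open>auto simp: set_up intro!: comm_GG\<close>)
  also have "... = [G (Suc j)] @ up a b" using d by simp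
  finally show ?thesis .
qed


definition Pw :: "nat \<Rightarrow> nat \<Rightarrow> gen list" where "Pw n k = dn k n"
definition Qw :: "nat \<Rightarrow> nat \<Rightarrow> gen list" where
  "Qw n k = (if k = 1 then dn 2 n @ [Gp] else dn 1 n @ [Gp] @ up 2 k)"
definition isRep :: "nat \<Rightarrow> gen list \<Rightarrow> bool" where
  "isRep n R = (\<exists>k. 1 \<le> k \<and> k \<le> n \<and> (R = Pw n k \<or> R = Qw n k))"
definition Hword :: "nat \<Rightarrow> gen list \<Rightarrow> bool" where
  "Hword n h = (\<forall>g\<in>set h. (g = Gp \<and> 3 \<le> n) \<or> (\<exists>i. g = G i \<and> 1 \<le> i \<and> i + 2 \<le> n))"
definition OK :: "nat \<Rightarrow> gen list \<Rightarrow> gen \<Rightarrow> bool" where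
  "OK n R g = (\<exists>h R'. Hword n h \<and> isRep n R' \<and> Dn_eq n (R @ [g]) (h @ R'))"

lemma OKI: "Dn_eq n (R @ [g]) (h @ R') \<Longrightarrow> Hword n h \<Longrightarrow> isRep n R' \<Longrightarrow> OK n R g"
  unfolding OK_def by blast
lemma isRepP: "1 \<le> k \<Longrightarrow> k \<le> n \<Longrightarrow> isRep n (Pw n k)" unfolding isRep_def by blast
lemma isRepQ: "1 \<le> k \<Longrightarrow> k \<le> n \<Longrightarrow> isRep n (Qw n k)" unfolding isRep_def by blast
lemma Hnil: "Hword n []" by (simp add: Hword_def)
lemma HG: "1 \<le> i \<Longrightarrow> i + 2 \<le> n \<Longrightarrow> Hword n [G i]" by (simp add: Hword_def)
lemma HP: "3 \<le> n \<Longrightarrow> Hword n [Gp]" by (simp add: Hword_def)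

lemma OK_P_G: assumes "2 \<le> n" "1 \<le> k" "k \<le> n" "1 \<le> j" "j \<le> n - 1"
  shows "OK n (Pw n k) (G j)"
proof -
  consider "Suc j < k" | "Suc j = k" | "j = k" | "k < j" by linarith
  then show ?thesis
  proof cases
    case 1
    have "Dn_eq n (dn k n @ [G j]) ([G j] @ dn k n)"
      by (rule comm_word') (use assms 1 in \<open>auto simp: set_dn intro!: comm_GG\<close>)
    then show ?thesis using assms 1 by (intro OKI[where h="[G j]" and R'="Pw n k"]) (use isRepP[of k n] in \<open>auto simp: Pw_def intro: HG\<close>)
  next
    case 2
    have "dn k n @ [G j] = [] @ dn j n" using assms 2 by (simp add: dn_snoc)
    then show ?thesis using assms 2
      by (intro OKI[where h="[]" and R'="Pw n j"]) (use isRepP[of j n] in \<open>auto simp: Pw_def Dn_eq.refl intro: Hnil\<close>)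
  next
    case 3
    have "dn k n @ [G j] = dn (Suc k) n @ [G k, G k] @ []" using assms 3 by (simp add: dn_snoc)
    also have "Dn_eq n ... (dn (Suc k) n @ [])" using assms 3 by (intro cancel) (simp add: vG)
    finally show ?thesis using assms 3
      by (intro OKI[where h="[]" and R'="Pw n (Suc k)"]) (use isRepP[of "Suc k" n] in \<open>auto simp: Pw_def intro: Hnil\<close>)
  next
    case 4
    then obtain i where i: "j = Suc i" "k \<le> i" by (cases j) auto
    have "Dn_eq n (dn k n @ [G (Suc i)]) ([G i] @ dn k n)" using assms i by (intro L2) auto
    then show ?thesis using assms i
      by (intro OKI[where h="[G i]" and R'="Pw n k"]) (use isRepP[of k n] in \<open>auto simp: Pw_def intro: HG\<close>)
  qed
qed

lemma OK_P_p: assumes "2 \<le> n" "1 \<le> k" "k \<le> n"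
  shows "OK n (Pw n k) Gp"
proof -
  consider "3 \<le> k" | "k = 2" | "k = 1" using assms by linarith
  then show ?thesis
  proof cases
    case 1
    have "Dn_eq n (dn k n @ [Gp]) ([Gp] @ dn k n)"
      by (rule comm_word') (use assms 1 in \<open>auto simp: set_dn intro!: comm_pG\<close>)
    then show ?thesis using assms 1 by (intro OKI[where h="[Gp]" and R'="Pw n k"]) (use isRepP[of k n] in \<open>auto simp: Pw_def intro: HP\<close>)
  next
    case 2
    then show ?thesis using assms
      by (intro OKI[where h="[]" and R'="Qw n 1"]) (use isRepQ[of 1 n] in \<open>auto simp: Pw_def Qw_def Dn_eq.refl intro: Hnil\<close>)
  next
    case 3
    then show ?thesis using assms
      by (intro OKI[where h="[]" and R'="Qw n 2"]) (use isRepQ[of 2 n] in \<open>auto simp: Pw_def Qw_def up_empty Dn_eq.refl intro: Hnil\<close>)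
  qed
qed


lemma OK_Q1: assumes "2 \<le> n" "valid_gen n g"
  shows "OK n (Qw n 1) g"
proof (cases g)
  case Gp
  have "Qw n 1 @ [g] = dn 2 n @ [Gp, Gp] @ []" using Gp by (simp add: Qw_def)
  also have "Dn_eq n ... (dn 2 n @ [])" by (rule cancel[OF vP])
  finally show ?thesis
    by (intro OKI[where h="[]" and R'="Pw n 2"]) (use isRepP[of 2 n] assms in \<open>auto simp: Pw_def intro: Hnil\<close>)
next
  case (G j)
  have j: "1 \<le> j" "j \<le> n - 1" using assms G by (auto simp: vG)
  consider "3 \<le> j" | "j = 2" | "j = 1" using j by linarith
  then show ?thesis
  proof cases
    case 1
    then obtain i where i: "j = Suc i" "2 \<le> i" by (cases j) auto
    have "Qw n 1 @ [g] = dn 2 n @ [Gp, G j] @ []" using G by (simp add: Qw_def)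
    also have "Dn_eq n ... (dn 2 n @ [G j, Gp] @ [])" using j 1 by (intro Dn_eq.ctxt comm_pG) auto
    also have "... = (dn 2 n @ [G (Suc i)]) @ [Gp]" using i by simp
    also have "Dn_eq n ... (([G i] @ dn 2 n) @ [Gp])" using i j by (intro ctxL L2) auto
    finally have "Dn_eq n (Qw n 1 @ [g]) ([G i] @ Qw n 1)" by (simp add: Qw_def)
    then show ?thesis by (rule OKI) (use i j in \<open>auto intro: isRepQ HG\<close>)
  next
    case 2
    have n3: "3 \<le> n" using j 2 by simp
    have d: "dn 2 n = dn 3 n @ [G 2]" using n3 by (simp add: dn_snoc numeral_3_eq_3 numeral_2_eq_2)
    have "Qw n 1 @ [g] = dn 3 n @ [G 2, Gp, G 2] @ []" using G 2 d by (simp add: Qw_def)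
    also have "Dn_eq n ... (dn 3 n @ [Gp, G 2, Gp] @ [])"
      by (rule Dn_eq.ctxt, rule Dn_eq.sym, rule braid_pG) (use n3 in simp)
    also have "... = (dn 3 n @ [Gp]) @ [G 2, Gp]" by simp
    also have "Dn_eq n ... (([Gp] @ dn 3 n) @ [G 2, Gp])"
      by (rule ctxL, rule comm_word') (use n3 in \<open>auto simp: set_dn intro!: comm_pG\<close>)
    also have "... = [Gp] @ Qw n 1" using d by (simp add: Qw_def)
    finally show ?thesis by (rule OKI) (use n3 in \<open>auto intro: isRepQ HP\<close>)
  next
    case 3
    have "Qw n 1 @ [g] = dn 2 n @ [Gp, G 1] @ []" using G 3 by (simp add: Qw_def)
    also have "Dn_eq n ... (dn 2 n @ [G 1, Gp] @ [])" using assms by (intro Dn_eq.ctxt comm_pG) auto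
    also have "... = [] @ Qw n 2" using assms dn_snoc[of 1 n] by (simp add: Qw_def up_empty numeral_2_eq_2)
    finally show ?thesis by (rule OKI) (use assms in \<open>auto intro: isRepQ Hnil\<close>)
  qed
qed

lemma identX: assumes "3 \<le> n"
  shows "Dn_eq n [G 2, G 1, Gp, G 2, G 1] [Gp, G 2, G 1, Gp, G 2]"
proof -
  have "[G 2, G 1, Gp, G 2, G 1] = [G 2] @ [G 1, Gp] @ [G 2, G 1]" by simp
  also have "Dn_eq n ... ([G 2] @ [Gp, G 1] @ [G 2, G 1])"
    by (rule Dn_eq.ctxt, rule Dn_eq.sym, rule comm_pG) (use assms in auto)
  also have "... = [G 2, Gp] @ [G 1, G 2, G 1] @ []" by simp
  also have "Dn_eq n ... ([G 2, Gp] @ [G 2, G 1, G 2] @ [])"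
    using braid_GG[of 1 n] assms by (intro Dn_eq.ctxt) (simp add: numeral_2_eq_2)
  also have "... = [] @ [G 2, Gp, G 2] @ [G 1, G 2]" by simp
  also have "Dn_eq n ... ([] @ [Gp, G 2, Gp] @ [G 1, G 2])"
    by (rule Dn_eq.ctxt, rule Dn_eq.sym, rule braid_pG) (use assms in simp)
  also have "... = [Gp, G 2] @ [Gp, G 1] @ [G 2]" by simp
  also have "Dn_eq n ... ([Gp, G 2] @ [G 1, Gp] @ [G 2])"
    by (rule Dn_eq.ctxt, rule comm_pG) (use assms in auto)
  finally show ?thesis by simp
qed


lemma Qk_def: "2 \<le> k \<Longrightarrow> Qw n k = dn 1 n @ [Gp] @ up 2 k" by (simp add: Qw_def)

lemma OK_Qk_p: assumes "2 \<le> n" "2 \<le> k" "k \<le> n"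
  shows "OK n (Qw n k) Gp"
proof (cases "k = 2")
  case True
  have "Qw n k @ [Gp] = dn 1 n @ [Gp, Gp] @ []" using True by (simp add: Qk_def up_empty)
  also have "Dn_eq n ... (dn 1 n @ [])" by (rule cancel[OF vP])
  also have "... = [] @ Pw n 1" by (simp add: Pw_def)
  finally show ?thesis by (rule OKI) (use assms in \<open>auto intro: isRepP Hnil\<close>)
next
  case False
  hence k3: "3 \<le> k" and n3: "3 \<le> n" using assms by auto
  have u: "up 2 k = G 2 # up 3 k" using k3 by (simp add: up_cons numeral_3_eq_3 numeral_2_eq_2)
  have d: "dn 1 n = dn 3 n @ [G 2, G 1]" using n3 dn_snoc[of 1 n] dn_snoc[of 2 n]
    by (simp add: numeral_3_eq_3 numeral_2_eq_2)
  have br: "Dn_eq n [G 1, G 2, G 1] [G 2, G 1, G 2]" using braid_GG[of 1 n] n3 by (simp add: numeral_2_eq_2)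
  have "Qw n k @ [Gp] = dn 1 n @ [Gp, G 2] @ (up 3 k @ [Gp])" using assms u by (simp add: Qk_def)
  also have "Dn_eq n ... (dn 1 n @ [Gp, G 2] @ ([Gp] @ up 3 k))"
    by (rule ctxR, rule ctxR, rule comm_word') (use assms in \<open>auto simp: set_up intro!: comm_pG\<close>)
  also have "... = dn 1 n @ [Gp, G 2, Gp] @ up 3 k" by simp
  also have "Dn_eq n ... (dn 1 n @ [G 2, Gp, G 2] @ up 3 k)"
    by (rule Dn_eq.ctxt, rule braid_pG) (use n3 in simp)
  also have "... = dn 3 n @ [G 2, G 1, G 2] @ ([Gp, G 2] @ up 3 k)" using d by simp
  also have "Dn_eq n ... (dn 3 n @ [G 1, G 2, G 1] @ ([Gp, G 2] @ up 3 k))"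
    by (rule Dn_eq.ctxt[OF Dn_eq.sym[OF br]])
  also have "... = (dn 3 n @ [G 1]) @ [G 2, G 1, Gp, G 2] @ up 3 k" by simp
  also have "Dn_eq n ... (([G 1] @ dn 3 n) @ [G 2, G 1, Gp, G 2] @ up 3 k)"
    by (rule ctxL, rule comm_word') (use assms in \<open>auto simp: set_dn intro!: comm_GG\<close>)
  also have "... = [G 1] @ Qw n k" using d u assms by (simp add: Qk_def)
  finally show ?thesis by (rule OKI) (use assms n3 in \<open>auto intro: isRepQ HG\<close>)
qed

lemma OK_Qk_G1: assumes "2 \<le> n" "2 \<le> k" "k \<le> n"
  shows "OK n (Qw n k) (G 1)"
proof (cases "k = 2")
  case True
  have d1: "dn 1 n = dn 2 n @ [G 1]" using assms dn_snoc[of 1 n] by (simp add: numeral_2_eq_2)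
  have "Qw n k @ [G 1] = dn 1 n @ [Gp, G 1] @ []" using True by (simp add: Qk_def up_empty)
  also have "Dn_eq n ... (dn 1 n @ [G 1, Gp] @ [])" using assms by (intro Dn_eq.ctxt comm_pG) auto
  also have "... = dn 2 n @ [G 1, G 1] @ [Gp]" using d1 by simp
  also have "Dn_eq n ... (dn 2 n @ [Gp])" using assms by (intro cancel) (simp add: vG)
  also have "... = [] @ Qw n 1" by (simp add: Qw_def)
  finally show ?thesis by (rule OKI) (use assms in \<open>auto intro: isRepQ Hnil\<close>)
next
  case False
  hence k3: "3 \<le> k" and n3: "3 \<le> n" using assms by auto
  have u: "up 2 k = G 2 # up 3 k" using k3 by (simp add: up_cons numeral_3_eq_3 numeral_2_eq_2)
  have d: "dn 1 n = dn 3 n @ [G 2, G 1]" using n3 dn_snoc[of 1 n] dn_snoc[of 2 n]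
    by (simp add: numeral_3_eq_3 numeral_2_eq_2)
  have "Qw n k @ [G 1] = dn 1 n @ [Gp, G 2] @ (up 3 k @ [G 1])" using assms u by (simp add: Qk_def)
  also have "Dn_eq n ... (dn 1 n @ [Gp, G 2] @ ([G 1] @ up 3 k))"
    by (rule ctxR, rule ctxR, rule comm_word') (use assms in \<open>auto simp: set_up intro!: comm_GG\<close>)
  also have "... = dn 3 n @ [G 2, G 1, Gp, G 2, G 1] @ up 3 k" using d by simp
  also have "Dn_eq n ... (dn 3 n @ [Gp, G 2, G 1, Gp, G 2] @ up 3 k)"
    by (rule Dn_eq.ctxt, rule identX[OF n3])
  also have "... = (dn 3 n @ [Gp]) @ [G 2, G 1, Gp, G 2] @ up 3 k" by simp
  also have "Dn_eq n ... (([Gp] @ dn 3 n) @ [G 2, G 1, Gp, G 2] @ up 3 k)"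
    by (rule ctxL, rule comm_word') (use assms in \<open>auto simp: set_dn intro!: comm_pG\<close>)
  also have "... = [Gp] @ Qw n k" using d u assms by (simp add: Qk_def)
  finally show ?thesis by (rule OKI) (use assms n3 in \<open>auto intro: isRepQ HP\<close>)
qed

lemma OK_Qk_G: assumes "2 \<le> n" "2 \<le> k" "k \<le> n" "2 \<le> j" "j \<le> n - 1"
  shows "OK n (Qw n k) (G j)"
proof -
  consider "k < j" | "j = k" | "Suc j = k" | "j + 2 \<le> k" by linarith
  then show ?thesis
  proof cases
    case 1
    then obtain i where i: "j = Suc i" "k \<le> i" by (cases j) auto
    have "Qw n k @ [G j] = dn 1 n @ [Gp] @ (up 2 k @ [G j])" using assms by (simp add: Qk_def)
    also have "Dn_eq n ... (dn 1 n @ [Gp] @ ([G j] @ up 2 k))"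
      by (rule ctxR, rule ctxR, rule comm_word') (use assms 1 in \<open>auto simp: set_up intro!: comm_GG\<close>)
    also have "... = dn 1 n @ [Gp, G j] @ up 2 k" by simp
    also have "Dn_eq n ... (dn 1 n @ [G j, Gp] @ up 2 k)" using assms 1 by (intro Dn_eq.ctxt comm_pG) auto
    also have "... = (dn 1 n @ [G (Suc i)]) @ [Gp] @ up 2 k" using i by simp
    also have "Dn_eq n ... (([G i] @ dn 1 n) @ [Gp] @ up 2 k)" using assms i by (intro ctxL L2) auto
    also have "... = [G i] @ Qw n k" using assms by (simp add: Qk_def)
    finally show ?thesis by (rule OKI) (use assms i in \<open>auto intro: isRepQ HG\<close>)
  next
    case 2
    have "Qw n k @ [G j] = [] @ Qw n (Suc k)" using assms 2 by (simp add: Qk_def up_snoc)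
    hence "Dn_eq n (Qw n k @ [G j]) ([] @ Qw n (Suc k))" by (simp add: Dn_eq.refl)
    then show ?thesis by (rule OKI) (use assms 2 in \<open>auto intro: isRepQ Hnil\<close>)
  next
    case 3
    have "Qw n k @ [G j] = (dn 1 n @ [Gp] @ up 2 j) @ [G j, G j] @ []" using assms 3 up_snoc[of 2 j] by (simp add: Qk_def)
    also have "Dn_eq n ... ((dn 1 n @ [Gp] @ up 2 j) @ [])" using assms by (intro cancel) (simp add: vG)
    also have "... = [] @ Qw n j" using assms by (simp add: Qk_def)
    finally show ?thesis by (rule OKI) (use assms 3 in \<open>auto intro: isRepQ Hnil\<close>)
  next
    case 4
    have "Qw n k @ [G j] = dn 1 n @ [Gp] @ (up 2 k @ [G j])" using assms by (simp add: Qk_def)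
    also have "Dn_eq n ... (dn 1 n @ [Gp] @ ([G (Suc j)] @ up 2 k))"
      using assms 4 by (intro ctxR L3) auto
    also have "... = dn 1 n @ [Gp, G (Suc j)] @ up 2 k" by simp
    also have "Dn_eq n ... (dn 1 n @ [G (Suc j), Gp] @ up 2 k)" using assms 4 by (intro Dn_eq.ctxt comm_pG) auto
    also have "... = (dn 1 n @ [G (Suc j)]) @ [Gp] @ up 2 k" by simp
    also have "Dn_eq n ... (([G j] @ dn 1 n) @ [Gp] @ up 2 k)" using assms 4 by (intro ctxL L2) auto
    also have "... = [G j] @ Qw n k" using assms by (simp add: Qk_def)
    finally show ?thesis by (rule OKI) (use assms 4 in \<open>auto intro: isRepQ HG\<close>)
  qed
qed

lemma OK_all: assumes "2 \<le> n" "isRep n R" "valid_gen n g" shows "OK n R g"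
proof -
  obtain k where k: "1 \<le> k" "k \<le> n" "R = Pw n k \<or> R = Qw n k" using assms unfolding isRep_def by blast
  show ?thesis
  proof (cases g)
    case Gp
    then show ?thesis using k assms OK_P_p OK_Q1 OK_Qk_p
      by (metis One_nat_def Suc_1 not_less_eq_eq order_antisym_conv)
  next
    case (G j)
    have j: "1 \<le> j" "j \<le> n - 1" using assms G by (auto simp: vG)
    show ?thesis
    proof (cases "R = Pw n k")
      case True then show ?thesis using OK_P_G[OF assms(1) k(1,2) j] G by simp
    next
      case False
      hence R: "R = Qw n k" using k by blast
      consider "k = 1" | "2 \<le> k \<and> j = 1" | "2 \<le> k \<and> 2 \<le> j" using k j by linarith
      then show ?thesis
        by cases (use R G assms k j OK_Q1 OK_Qk_G1 OK_Qk_G in auto)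
    qed
  qed
qed


lemma Hword_app: "Hword n (a @ b) = (Hword n a \<and> Hword n b)" by (auto simp: Hword_def)

lemma stageA: assumes "2 \<le> n" shows "valid_word n w \<Longrightarrow> \<exists>x R. Hword n x \<and> isRep n R \<and> Dn_eq n w (x @ R)"
proof (induction w rule: rev_induct)
  case Nil
  have "isRep n (Pw n n)" using assms by (intro isRepP) auto
  moreover have "Pw n n = []" by (simp add: Pw_def dn_empty)
  ultimately show ?case using Hnil Dn_eq.refl by fastforce
next
  case (snoc g w)
  have vw: "valid_word n w" and vg: "valid_gen n g" using snoc.prems by (auto simp: valid_word_def)
  obtain x R where xR: "Hword n x" "isRep n R" "Dn_eq n w (x @ R)" using snoc.IH[OF vw] by blast
  obtain h R' where hR: "Hword n h" "isRep n R'" "Dn_eq n (R @ [g]) (h @ R')"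
    using OK_all[OF assms xR(2) vg] unfolding OK_def by blast
  have "Dn_eq n (w @ [g]) ((x @ R) @ [g])" by (rule ctxL[OF xR(3)])
  also have "... = x @ (R @ [g])" by simp
  also have "Dn_eq n ... (x @ (h @ R'))" by (rule ctxR[OF hR(3)])
  also have "... = (x @ h) @ R'" by simp
  finally have e: "Dn_eq n (w @ [g]) ((x @ h) @ R')" .
  have H: "Hword n (x @ h)" using xR hR by (simp add: Hword_app)
  show ?case using H hR(2) e by blast
qed

fun fg :: "gen \<Rightarrow> int \<Rightarrow> int" where
  "fg Gp x = (if x = 1 then -2 else if x = 2 then -1 else if x = -1 then 2 else if x = -2 then 1 else x)"
| "fg (G i) x = (if i = 0 then x else if x = int i then int i + 1 else if x = int i + 1 then int i
     else if x = - int i then - int i - 1 else if x = - int i - 1 then - int i else x)"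
lemma fg_inv[simp]: "fg g (fg g x) = x" by (cases g) auto

lemma fixG: assumes "\<bar>x\<bar> \<noteq> int i" "\<bar>x\<bar> \<noteq> int i + 1" shows "fg (G i) x = x"
proof -
  have "x \<noteq> int i \<and> x \<noteq> int i + 1 \<and> x \<noteq> - int i \<and> x \<noteq> - int i - 1" using assms by auto
  then show ?thesis by simp
qed
lemma absG: assumes "\<bar>x\<bar> = int i \<or> \<bar>x\<bar> = int i + 1" shows "\<bar>fg (G i) x\<bar> = int i \<or> \<bar>fg (G i) x\<bar> = int i + 1"
proof -
  consider "x = int i" | "x = int i + 1" | "x = - int i" | "x = - int i - 1" using assms by arith
  then show ?thesis by cases auto
qed
lemma fixP: assumes "\<bar>x\<bar> \<noteq> 1" "\<bar>x\<bar> \<noteq> 2" shows "fg Gp x = x"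
proof -
  have "x \<noteq> 1 \<and> x \<noteq> 2 \<and> x \<noteq> -1 \<and> x \<noteq> -2" using assms by auto
  then show ?thesis by simp
qed
lemma absP: assumes "\<bar>x\<bar> = 1 \<or> \<bar>x\<bar> = 2" shows "\<bar>fg Gp x\<bar> = 1 \<or> \<bar>fg Gp x\<bar> = 2"
proof -
  consider "x = 1" | "x = 2" | "x = -1" | "x = -2" using assms by arith
  then show ?thesis by cases auto
qed

declare fg.simps[simp del]

lemma comm_f0: assumes "i + 2 \<le> j" shows "fg (G i) (fg (G j) x) = fg (G j) (fg (G i) x)"
proof (cases "\<bar>x\<bar> = int i \<or> \<bar>x\<bar> = int i + 1")
  case True
  have a: "fg (G j) x = x" using True assms by (intro fixG) auto
  have b: "fg (G j) (fg (G i) x) = fg (G i) x" using absG[OF True] assms by (intro fixG) auto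
  show ?thesis using a b by simp
next
  case False
  have a: "fg (G i) x = x" using False by (intro fixG) auto
  show ?thesis
  proof (cases "\<bar>x\<bar> = int j \<or> \<bar>x\<bar> = int j + 1")
    case True
    have b: "fg (G i) (fg (G j) x) = fg (G j) x" using absG[OF True] assms by (intro fixG) auto
    show ?thesis using a b by simp
  next
    case False
    have b: "fg (G j) x = x" using False by (intro fixG) auto
    show ?thesis using a b by simp
  qed
qed

lemma comm_f: "i + 2 \<le> j \<or> j + 2 \<le> i \<Longrightarrow> fg (G i) (fg (G j) x) = fg (G j) (fg (G i) x)"
  using comm_f0[of i j x] comm_f0[of j i x] by metis

lemma commp3_f: assumes "3 \<le> i" shows "fg Gp (fg (G i) x) = fg (G i) (fg Gp x)"
proof (cases "\<bar>x\<bar> = 1 \<or> \<bar>x\<bar> = 2")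
  case True
  have a: "fg (G i) x = x" using True assms by (intro fixG) auto
  have b: "fg (G i) (fg Gp x) = fg Gp x" using absP[OF True] assms by (intro fixG) auto
  show ?thesis using a b by simp
next
  case False
  have a: "fg Gp x = x" using False by (intro fixP) auto
  show ?thesis
  proof (cases "\<bar>x\<bar> = int i \<or> \<bar>x\<bar> = int i + 1")
    case True
    have b: "fg Gp (fg (G i) x) = fg (G i) x" using absG[OF True] assms by (intro fixP) auto
    show ?thesis using a b by simp
  next
    case False
    have b: "fg (G i) x = x" using False by (intro fixG) auto
    show ?thesis using a b by simp
  qed
qed

lemma commp1_f: "fg Gp (fg (G 1) x) = fg (G 1) (fg Gp x)"
proof -
  consider "x = 1" | "x = 2" | "x = -1" | "x = -2" | "\<bar>x\<bar> \<noteq> 1 \<and> \<bar>x\<bar> \<noteq> 2" by arith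
  then show ?thesis
  proof cases
    case 5
    have "fg Gp x = x" "fg (G 1) x = x" using 5 by (auto intro: fixP fixG)
    then show ?thesis by simp
  qed (simp_all add: fg.simps)
qed

lemma commp_f: "1 \<le> i \<Longrightarrow> i \<noteq> 2 \<Longrightarrow> fg Gp (fg (G i) x) = fg (G i) (fg Gp x)"
  using commp1_f commp3_f[of i] by (cases "i = 1") simp_all

lemma braid_f: assumes "1 \<le> i" shows "fg (G i) (fg (G (i+1)) (fg (G i) x)) = fg (G (i+1)) (fg (G i) (fg (G (i+1)) x))"
proof -
  consider "x = int i" | "x = int i + 1" | "x = int i + 2" | "x = - int i" | "x = - int i - 1" | "x = - int i - 2"
    | "\<bar>x\<bar> \<noteq> int i \<and> \<bar>x\<bar> \<noteq> int i + 1 \<and> \<bar>x\<bar> \<noteq> int i + 2" by arith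
  then show ?thesis
  proof cases
    case 7
    have "fg (G i) x = x" "fg (G (i+1)) x = x" using 7 by (auto intro!: fixG)
    then show ?thesis by simp
  qed (use assms in \<open>simp_all add: fg.simps\<close>)
qed

lemma braidp_f: "fg Gp (fg (G 2) (fg Gp x)) = fg (G 2) (fg Gp (fg (G 2) x))"
proof -
  consider "x = 1" | "x = 2" | "x = 3" | "x = -1" | "x = -2" | "x = -3" | "\<bar>x\<bar> \<noteq> 1 \<and> \<bar>x\<bar> \<noteq> 2 \<and> \<bar>x\<bar> \<noteq> 3" by arith
  then show ?thesis
  proof cases
    case 7
    have "fg Gp x = x" "fg (G 2) x = x" using 7 by (auto intro!: fixP fixG)
    then show ?thesis by simp
  qed (simp_all add: fg.simps)
qed

fun evw :: "gen list \<Rightarrow> int \<Rightarrow> int" where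
  "evw [] x = x"
| "evw (g # w) x = evw w (fg g x)"

lemma evw_append: "evw (u @ v) x = evw v (evw u x)"
  by (induction u arbitrary: x) auto


lemma evw_rev: "evw (rev w) (evw w x) = x"
  by (induction w arbitrary: x) (auto simp: evw_append)


lemma rel_ev: assumes "r \<in> Dn_rels n" shows "evw r x = x"
  using assms unfolding Dn_rels_def
proof (elim UnE)
  assume "r \<in> {[g, g] |g. valid_gen n g}" then show ?thesis by auto
next
  assume "r \<in> {wpow [G i, G (i + 1)] 3 |i. 1 \<le> i \<and> i + 1 \<le> n - 1}"
  then obtain i where "r = wpow [G i, G (i + 1)] 3" "1 \<le> i" by blast
  then show ?thesis by (simp only: wpow3 evw.simps braid_f fg_inv)
next
  assume "r \<in> {wpow [G i, G j] 2 |i j. 1 \<le> i \<and> i \<le> n - 1 \<and> 1 \<le> j \<and> j \<le> n - 1 \<and> (i + 2 \<le> j \<or> j + 2 \<le> i)}"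
  then obtain i j where "r = wpow [G i, G j] 2" "1 \<le> i" "1 \<le> j" "i + 2 \<le> j \<or> j + 2 \<le> i" by blast
  moreover have e: "fg (G i) (fg (G j) (fg (G i) x)) = fg (G j) (fg (G i) (fg (G i) x))"
    using comm_f[of i j "fg (G i) x"] calculation by blast
  ultimately show ?thesis by (simp only: wpow2 evw.simps fg_inv e)
next
  assume "r \<in> {wpow [Gp, G 2] 3 |u::unit. 2 \<le> n - 1}"
  then have "r = wpow [Gp, G 2] 3" by blast
  then show ?thesis by (simp only: wpow3 evw.simps braidp_f fg_inv)
next
  assume "r \<in> {wpow [Gp, G i] 2 |i. 1 \<le> i \<and> i \<le> n - 1 \<and> i \<noteq> 2}"
  then obtain i where "r = wpow [Gp, G i] 2" "1 \<le> i" "i \<noteq> 2" by blast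
  moreover have e: "fg Gp (fg (G i) (fg Gp x)) = fg (G i) (fg Gp (fg Gp x))"
    using commp_f[of i "fg Gp x"] calculation by blast
  ultimately show ?thesis by (simp only: wpow2 evw.simps fg_inv e)
qed

lemma sound: "Dn_eq n u v \<Longrightarrow> evw u = evw v"
proof (induction rule: Dn_eq.induct)
  case (ctxt u v a b)
  then show ?case by (simp add: evw_append fun_eq_iff)
next
  case (rel r)
  then show ?case using rel_ev by fastforce
qed auto


lemma evw_fix: "(\<forall>g\<in>set w. fg g x = x) \<Longrightarrow> evw w x = x"
  by (induction w) auto

lemma fgG_up: "1 \<le> k \<Longrightarrow> fg (G k) (int (Suc k)) = int k" by (simp add: fg.simps)
lemma fgG_neg: "1 \<le> k \<Longrightarrow> fg (G k) (- int k) = - int (Suc k)" by (simp add: fg.simps)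
lemma fgG_down: "1 \<le> k \<Longrightarrow> fg (G k) (int k) = int (Suc k)" by (simp add: fg.simps)
lemma fgG_negup: "1 \<le> k \<Longrightarrow> fg (G k) (- int (Suc k)) = - int k" by (simp add: fg.simps)

lemma ev_dn: assumes "k \<le> n" "1 \<le> k" shows "evw (dn k n) (int n) = int k"
  using assms
proof (induction k rule: inc_induct)
  case base then show ?case by (simp add: dn_empty)
next
  case (step m)
  have "dn m n = dn (Suc m) n @ [G m]" using step by (simp add: dn_snoc)
  then show ?case using step fgG_up[of m] by (simp add: evw_append)
qed

lemma ev_up2: assumes "2 \<le> k" shows "evw (up 2 k) (-2) = - int k"
  using assms
proof (induction k rule: dec_induct)
  case base then show ?case by (simp add: up_empty)
next
  case (step m)
  then show ?case using fgG_neg[of m] by (simp add: up_snoc evw_append)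
qed

lemma ev_up1: assumes "2 \<le> x" "x \<le> n"
  shows "evw (up 1 n) (int x) = int x - 1 \<and> evw (up 1 n) (- int x) = - int x + 1"
  using assms(2)
proof (induction n rule: dec_induct)
  case base
  obtain y where y: "x = Suc y" "1 \<le> y" using assms by (cases x) auto
  have u: "up 1 x = up 1 y @ [G y]" using y by (simp add: up_snoc)
  have f1: "evw (up 1 y) (int x) = int x" using y
    by (intro evw_fix) (auto simp: set_up intro!: fixG)
  have f2: "evw (up 1 y) (- int x) = - int x" using y
    by (intro evw_fix) (auto simp: set_up intro!: fixG)
  show ?case using f1 f2 u y fgG_up[of y] fgG_negup[of y] by (simp add: evw_append)
next
  case (step m)
  have a: "fg (G m) (int x - 1) = int x - 1" using step assms by (intro fixG) auto
  have b: "fg (G m) (- int x + 1) = - int x + 1" using step assms by (intro fixG) auto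
  have "up 1 (Suc m) = up 1 m @ [G m]" using step assms by (intro up_snoc) auto
  then show ?case using step a b by (simp add: evw_append)
qed

lemma t_up: "t_word n = up 1 n" by (simp add: t_word_def up_def)

lemma ev_tpow: "i < x \<Longrightarrow> x \<le> n \<Longrightarrow>
   evw (wpow (t_word n) i) (int x) = int x - int i \<and> evw (wpow (t_word n) i) (- int x) = - int x + int i"
proof (induction i arbitrary: x)
  case 0 then show ?case by (simp add: wpow_0)
next
  case (Suc i)
  obtain y where y: "x = Suc y" using Suc by (cases x) auto
  have e: "evw (t_word n) (int x) = int y \<and> evw (t_word n) (- int x) = - int y"
    using ev_up1[of x n] Suc y by (simp add: t_up)
  have "evw (wpow (t_word n) i) (int y) = int y - int i \<and> evw (wpow (t_word n) i) (- int y) = - int y + int i"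
    using Suc y by (intro Suc.IH) auto
  then show ?case using e y by (simp add: wpow_Suc evw_append)
qed

lemma w_dn_up: "2 \<le> n \<Longrightarrow> w_word (n - 1) = dn 2 n @ [G 1, Gp] @ up 2 n"
  by (simp add: w_word_def dn_def up_def)

lemma ev_w: assumes "2 \<le> n" shows "evw (w_word (n - 1)) (int n) = - int n"
proof -
  have "evw (dn 2 n) (int n) = 2" using ev_dn[of 2 n] assms by simp
  moreover have "fg (G 1) 2 = 1" "fg Gp 1 = -2" by (simp_all add: fg.simps)
  ultimately show ?thesis using ev_up2[of n] assms unfolding w_dn_up[OF assms] by (simp add: evw_append)
qed

definition Cw :: "nat \<Rightarrow> nat \<Rightarrow> nat \<Rightarrow> gen list" where
  "Cw n j i = wpow (w_word (n - 1)) j @ wpow (t_word n) i"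

lemma ev_Cw: assumes "2 \<le> n" "j \<le> 1" "i \<le> n - 1"
  shows "evw (Cw n j i) (int n) = (if j = 0 then int n - int i else - int n + int i)"
proof (cases "j = 0")
  case True
  then show ?thesis using ev_tpow[of i n n] assms by (simp add: Cw_def wpow_0)
next
  case False
  hence "j = 1" using assms by simp
  moreover have "wpow w 1 = w" for w by (simp add: wpow_def)
  ultimately show ?thesis using ev_tpow[of i n n] assms ev_w[OF assms(1)] by (simp add: Cw_def evw_append)
qed

lemma ev_P: "1 \<le> k \<Longrightarrow> k \<le> n \<Longrightarrow> evw (Pw n k) (int n) = int k"
  by (simp add: Pw_def ev_dn)

lemma ev_Q: assumes "1 \<le> k" "k \<le> n" "2 \<le> n" shows "evw (Qw n k) (int n) = - int k"
proof (cases "k = 1")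
  case True
  have "evw (dn 2 n) (int n) = 2" using ev_dn[of 2 n] assms by simp
  moreover have "fg Gp 2 = -1" by (simp add: fg.simps)
  ultimately show ?thesis using True by (simp add: Qw_def evw_append)
next
  case False
  have "evw (dn 1 n) (int n) = 1" using ev_dn[of 1 n] assms by simp
  moreover have "fg Gp 1 = -2" by (simp add: fg.simps)
  ultimately show ?thesis using False assms ev_up2[of k] by (simp add: Qw_def evw_append)
qed

lemma Hword_fix: "Hword n x \<Longrightarrow> evw x (int n) = int n"
  by (rule evw_fix) (auto simp: Hword_def intro!: fixG fixP)

lemma Hword_valid: "Hword n x \<Longrightarrow> valid_word n x"
  by (auto simp: Hword_def valid_word_def valid_gen_def)

lemma valid_Cw: assumes "2 \<le> n" shows "valid_word n (Cw n j i)"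
proof -
  have "set (Cw n j i) \<subseteq> set (w_word (n - 1)) \<union> set (t_word n)"
    using set_wpow by (fastforce simp: Cw_def)
  moreover have "valid_word n (w_word (n - 1))" using assms unfolding w_dn_up[OF assms]
    by (auto simp: valid_word_def set_dn set_up valid_gen_def)
  moreover have "valid_word n (t_word n)" using assms
    by (auto simp: t_up valid_word_def set_up valid_gen_def)
  ultimately show ?thesis by (auto simp: valid_word_def)
qed

lemma stageB: assumes "2 \<le> n" "isRep n R"
  shows "\<exists>y j i. Hword n y \<and> j \<le> 1 \<and> i \<le> n - 1 \<and> Dn_eq n R (y @ Cw n j i)"
proof -
  obtain k where k: "1 \<le> k" "k \<le> n" "R = Pw n k \<or> R = Qw n k" using assms unfolding isRep_def by blast
  define j :: nat where "j = (if R = Pw n k then 0 else 1)"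
  define i where "i = n - k"
  have ji: "j \<le> 1" "i \<le> n - 1" using k by (auto simp: j_def i_def)
  obtain x R' where xR: "Hword n x" "isRep n R'" "Dn_eq n (Cw n j i) (x @ R')"
    using stageA[OF assms(1) valid_Cw[OF assms(1)]] by blast
  have "evw (Cw n j i) (int n) = evw R' (int n)"
    using sound[OF xR(3)] Hword_fix[OF xR(1)] by (simp add: evw_append)
  hence val: "evw R' (int n) = evw R (int n)"
    using ev_Cw[OF assms(1) ji] k ev_P ev_Q assms(1) by (auto simp: j_def i_def)
  have RR: "R' = R"
  proof -
    obtain k' where k': "1 \<le> k'" "k' \<le> n" "R' = Pw n k' \<or> R' = Qw n k'" using xR(2) unfolding isRep_def by blast
    show ?thesis using k k' val ev_P ev_Q assms(1) by auto
  qed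
  have vx: "valid_word n (rev x)" using Hword_valid[OF xR(1)] by (simp add: valid_word_def)
  have "R = [] @ R" by simp
  also have "Dn_eq n ... ((rev x @ x) @ R)" using rev_cancel[OF vx] by (rule_tac ctxL, rule_tac Dn_eq.sym) simp
  also have "... = rev x @ (x @ R')" using RR by simp
  also have "Dn_eq n ... (rev x @ Cw n j i)" by (rule ctxR, rule Dn_eq.sym, rule xR(3))
  finally have "Dn_eq n R (rev x @ Cw n j i)" .
  moreover have "Hword n (rev x)" using xR(1) by (simp add: Hword_def)
  ultimately show ?thesis using ji by blast
qed


lemma nf_append: assumes "length ii = m" "length jj = m"
  shows "nf_word (Suc (Suc m)) (ii @ [i]) (jj @ [j]) = nf_word (Suc m) ii jj @ Cw (Suc (Suc m)) j i"
proof -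
  have h: "\<And>k. k < m \<Longrightarrow> (ii @ [i]) ! k = ii ! k" "\<And>k. k < m \<Longrightarrow> (jj @ [j]) ! k = jj ! k"
    using assms by (auto simp: nth_append)
  have meq: "map (\<lambda>k. wpow (w_word (Suc k)) ((jj @ [j]) ! k) @ wpow (t_word (Suc (Suc k))) ((ii @ [i]) ! k)) [0..<m]
      = map (\<lambda>k. wpow (w_word (Suc k)) (jj ! k) @ wpow (t_word (Suc (Suc k))) (ii ! k)) [0..<m]"
    by (rule map_cong) (auto simp: h)
  show ?thesis using assms unfolding nf_word_def Cw_def by (simp add: meq) (use assms in \<open>simp add: nth_append\<close>)
qed

lemma vg_mono: "valid_gen m g \<Longrightarrow> m \<le> n \<Longrightarrow> valid_gen n g"
  by (cases g) (auto simp: valid_gen_def)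

lemma rels_mono: assumes "m \<le> n" shows "Dn_rels m \<subseteq> Dn_rels n"
  unfolding Dn_rels_def
proof (intro Un_mono)
  show "{[g, g] |g. valid_gen m g} \<subseteq> {[g, g] |g. valid_gen n g}" using vg_mono[OF _ assms] by blast
  show "{wpow [G i, G (i + 1)] 3 |i. 1 \<le> i \<and> i + 1 \<le> m - 1} \<subseteq> {wpow [G i, G (i + 1)] 3 |i. 1 \<le> i \<and> i + 1 \<le> n - 1}"
  proof
    fix r assume "r \<in> {wpow [G i, G (i + 1)] 3 |i. 1 \<le> i \<and> i + 1 \<le> m - 1}"
    then obtain i where "r = wpow [G i, G (i + 1)] 3" "1 \<le> i" "i + 1 \<le> m - 1" by blast
    moreover have "i + 1 \<le> n - 1" using calculation assms by linarith
    ultimately show "r \<in> {wpow [G i, G (i + 1)] 3 |i. 1 \<le> i \<and> i + 1 \<le> n - 1}" by blast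
  qed
  show "{wpow [G i, G j] 2 |i j. 1 \<le> i \<and> i \<le> m - 1 \<and> 1 \<le> j \<and> j \<le> m - 1 \<and> (i + 2 \<le> j \<or> j + 2 \<le> i)}
     \<subseteq> {wpow [G i, G j] 2 |i j. 1 \<le> i \<and> i \<le> n - 1 \<and> 1 \<le> j \<and> j \<le> n - 1 \<and> (i + 2 \<le> j \<or> j + 2 \<le> i)}"
  proof
    fix r assume "r \<in> {wpow [G i, G j] 2 |i j. 1 \<le> i \<and> i \<le> m - 1 \<and> 1 \<le> j \<and> j \<le> m - 1 \<and> (i + 2 \<le> j \<or> j + 2 \<le> i)}"
    then obtain i j where "r = wpow [G i, G j] 2" "1 \<le> i" "i \<le> m - 1" "1 \<le> j" "j \<le> m - 1" "i + 2 \<le> j \<or> j + 2 \<le> i" by blast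
    moreover have "i \<le> n - 1" "j \<le> n - 1" using calculation assms by linarith+
    ultimately show "r \<in> {wpow [G i, G j] 2 |i j. 1 \<le> i \<and> i \<le> n - 1 \<and> 1 \<le> j \<and> j \<le> n - 1 \<and> (i + 2 \<le> j \<or> j + 2 \<le> i)}" by blast
  qed
  show "{wpow [Gp, G 2] 3 |u::unit. 2 \<le> m - 1} \<subseteq> {wpow [Gp, G 2] 3 |u::unit. 2 \<le> n - 1}"
    using assms by auto
  show "{wpow [Gp, G i] 2 |i. 1 \<le> i \<and> i \<le> m - 1 \<and> i \<noteq> 2} \<subseteq> {wpow [Gp, G i] 2 |i. 1 \<le> i \<and> i \<le> n - 1 \<and> i \<noteq> 2}"
  proof
    fix r assume "r \<in> {wpow [Gp, G i] 2 |i. 1 \<le> i \<and> i \<le> m - 1 \<and> i \<noteq> 2}"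
    then obtain i where "r = wpow [Gp, G i] 2" "1 \<le> i" "i \<le> m - 1" "i \<noteq> 2" by blast
    moreover have "i \<le> n - 1" using calculation assms by linarith
    ultimately show "r \<in> {wpow [Gp, G i] 2 |i. 1 \<le> i \<and> i \<le> n - 1 \<and> i \<noteq> 2}" by blast
  qed
qed

lemma lift: "Dn_eq m u v \<Longrightarrow> m \<le> n \<Longrightarrow> Dn_eq n u v"
proof (induction rule: Dn_eq.induct)
  case (rel r) then show ?case using rels_mono Dn_eq.rel by blast
qed (auto intro: Dn_eq.intros)

lemma Hword2: "Hword 2 x \<Longrightarrow> x = []"
  by (cases x) (auto simp: Hword_def)

lemma Hword_valid_pred: "Hword (Suc n) x \<Longrightarrow> valid_word n x"
  by (auto simp: Hword_def valid_word_def valid_gen_def)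

lemma existence: "\<forall>w. valid_word (Suc (Suc m)) w \<longrightarrow> (\<exists>ii jj. length ii = Suc m \<and> length jj = Suc m
   \<and> (\<forall>k < Suc m. ii ! k \<le> k + 1) \<and> (\<forall>k < Suc m. jj ! k \<le> 1)
   \<and> Dn_eq (Suc (Suc m)) w (nf_word (Suc (Suc m)) ii jj))"
proof (induction m)
  case 0
  show ?case
  proof (intro allI impI)
    fix w assume vw: "valid_word (Suc (Suc 0)) w"
    have two: "(2::nat) \<le> Suc (Suc 0)" by simp
    obtain x R where xR: "Hword 2 x" "isRep 2 R" "Dn_eq 2 w (x @ R)"
      using stageA[of 2 w] vw by (auto simp: numeral_2_eq_2)
    obtain y j i where yji: "Hword 2 y" "j \<le> 1" "i \<le> 1" "Dn_eq 2 R (y @ Cw 2 j i)"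
      using stageB[of 2 R] xR(2) by auto
    have "Dn_eq 2 w (Cw 2 j i)" using xR(3) yji(4) Hword2[OF xR(1)] Hword2[OF yji(1)]
      by (auto intro: Dn_eq.trans)
    moreover have "nf_word 2 [i] [j] = Cw 2 j i"
      using nf_append[of "[]" 0 "[]" i j] by (simp add: numeral_2_eq_2 nf_word_def)
    ultimately have "Dn_eq (Suc (Suc 0)) w (nf_word (Suc (Suc 0)) [i] [j])" by (simp add: numeral_2_eq_2)
    then show "\<exists>ii jj. length ii = Suc 0 \<and> length jj = Suc 0 \<and> (\<forall>k<Suc 0. ii ! k \<le> k + 1) \<and>
          (\<forall>k<Suc 0. jj ! k \<le> 1) \<and> Dn_eq (Suc (Suc 0)) w (nf_word (Suc (Suc 0)) ii jj)"
      using yji by (intro exI[of _ "[i]"] exI[of _ "[j]"]) auto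
  qed
next
  case (Suc m)
  let ?n = "Suc (Suc (Suc m))"
  show ?case
  proof (intro allI impI)
    fix w assume vw: "valid_word ?n w"
    obtain x R where xR: "Hword ?n x" "isRep ?n R" "Dn_eq ?n w (x @ R)"
      using stageA[of ?n w] vw by auto
    obtain y j i where yji: "Hword ?n y" "j \<le> 1" "i \<le> ?n - 1" "Dn_eq ?n R (y @ Cw ?n j i)"
      using stageB[of ?n R] xR(2) by auto
    have "valid_word (Suc (Suc m)) (x @ y)" using xR(1) yji(1)
      by (intro Hword_valid_pred) (simp add: Hword_app)
    then obtain ii jj where IH: "length ii = Suc m" "length jj = Suc m"
      "\<forall>k < Suc m. ii ! k \<le> k + 1" "\<forall>k < Suc m. jj ! k \<le> 1"
      "Dn_eq (Suc (Suc m)) (x @ y) (nf_word (Suc (Suc m)) ii jj)"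
      using Suc.IH by blast
    have "Dn_eq ?n w (x @ R)" by (rule xR(3))
    also have "Dn_eq ?n ... (x @ (y @ Cw ?n j i))" by (rule ctxR[OF yji(4)])
    also have "... = (x @ y) @ Cw ?n j i" by simp
    also have "Dn_eq ?n ... (nf_word (Suc (Suc m)) ii jj @ Cw ?n j i)"
      by (rule ctxL, rule lift[OF IH(5)]) simp
    also have "... = nf_word ?n (ii @ [i]) (jj @ [j])" using nf_append[OF IH(1,2)] by simp
    finally have e: "Dn_eq ?n w (nf_word ?n (ii @ [i]) (jj @ [j]))" .
    have b1: "\<forall>k < Suc (Suc m). (ii @ [i]) ! k \<le> k + 1" using IH(1,3) yji(3)
      by (auto simp: nth_append less_Suc_eq)
    have b2: "\<forall>k < Suc (Suc m). (jj @ [j]) ! k \<le> 1" using IH(2,4) yji(2)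
      by (auto simp: nth_append less_Suc_eq)
    show "\<exists>ii jj. length ii = Suc (Suc m) \<and> length jj = Suc (Suc m) \<and> (\<forall>k<Suc (Suc m). ii ! k \<le> k + 1) \<and>
          (\<forall>k<Suc (Suc m). jj ! k \<le> 1) \<and> Dn_eq ?n w (nf_word ?n ii jj)"
      using e b1 b2 IH(1,2) by (intro exI[of _ "ii @ [i]"] exI[of _ "jj @ [j]"]) auto
  qed
qed


lemma nf_gens: assumes "g \<in> set (nf_word (Suc m) a b)"
  shows "g = Gp \<and> 1 \<le> m \<or> (\<exists>l. g = G l \<and> 1 \<le> l \<and> l \<le> m)"
proof -
  obtain k where k: "k < m" "g \<in> set (wpow (w_word (Suc k)) (b ! k)) \<union> set (wpow (t_word (Suc (Suc k))) (a ! k))"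
    using assms by (auto simp: nf_word_def)
  hence "g \<in> set (w_word (Suc k)) \<union> set (t_word (Suc (Suc k)))" using set_wpow by blast
  then show ?thesis using k by (auto simp: w_word_def t_word_def)
qed

lemma nf_fix: "evw (nf_word (Suc m) a b) (int (Suc (Suc m))) = int (Suc (Suc m))"
proof (rule evw_fix, intro ballI)
  fix g assume "g \<in> set (nf_word (Suc m) a b)"
  from nf_gens[OF this] show "fg g (int (Suc (Suc m))) = int (Suc (Suc m))"
    by (auto intro!: fixG fixP)
qed

lemma pref_bound: "\<forall>k<Suc n. (a @ [x]) ! k \<le> f k \<Longrightarrow> length a = n \<Longrightarrow> \<forall>k<n. a ! k \<le> f k"
  by (metis less_SucI nth_append)

lemma uniqueness: "\<forall>ii jj ii' jj'. length ii = Suc m \<and> length jj = Suc m \<and> length ii' = Suc m \<and> length jj' = Suc m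
   \<and> (\<forall>k < Suc m. ii ! k \<le> k + 1) \<and> (\<forall>k < Suc m. jj ! k \<le> 1)
   \<and> (\<forall>k < Suc m. ii' ! k \<le> k + 1) \<and> (\<forall>k < Suc m. jj' ! k \<le> 1)
   \<and> evw (nf_word (Suc (Suc m)) ii jj) = evw (nf_word (Suc (Suc m)) ii' jj') \<longrightarrow> ii = ii' \<and> jj = jj'"
proof (induction m)
  case 0
  show ?case
  proof (intro allI impI)
    fix ii jj ii' jj' :: "nat list"
    assume A: "length ii = Suc 0 \<and> length jj = Suc 0 \<and> length ii' = Suc 0 \<and> length jj' = Suc 0
     \<and> (\<forall>k < Suc 0. ii ! k \<le> k + 1) \<and> (\<forall>k < Suc 0. jj ! k \<le> 1)
     \<and> (\<forall>k < Suc 0. ii' ! k \<le> k + 1) \<and> (\<forall>k < Suc 0. jj' ! k \<le> 1)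
     \<and> evw (nf_word (Suc (Suc 0)) ii jj) = evw (nf_word (Suc (Suc 0)) ii' jj')"
    obtain i j i' j' where L: "ii = [i]" "jj = [j]" "ii' = [i']" "jj' = [j']"
      using A by (metis length_0_conv length_Suc_conv)
    have b: "i \<le> 1" "j \<le> 1" "i' \<le> 1" "j' \<le> 1" using A L by auto
    have "nf_word 2 ii jj = Cw 2 j i" "nf_word 2 ii' jj' = Cw 2 j' i'"
      using L nf_append[of "[]" 0 "[]"] by (simp_all add: numeral_2_eq_2 nf_word_def)
    hence "evw (Cw 2 j i) (int 2) = evw (Cw 2 j' i') (int 2)" using A by (simp add: numeral_2_eq_2)
    hence "(if j = 0 then int 2 - int i else - int 2 + int i) = (if j' = 0 then int 2 - int i' else - int 2 + int i')"
      using ev_Cw[of 2 j i] ev_Cw[of 2 j' i'] b by simp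
    hence "i = i' \<and> j = j'" using b by (simp split: if_splits)
    then show "ii = ii' \<and> jj = jj'" using L by simp
  qed
next
  case (Suc m)
  let ?n = "Suc (Suc (Suc m))"
  show ?case
  proof (intro allI impI)
    fix ii jj ii' jj' :: "nat list"
    assume A: "length ii = Suc (Suc m) \<and> length jj = Suc (Suc m) \<and> length ii' = Suc (Suc m) \<and> length jj' = Suc (Suc m)
     \<and> (\<forall>k < Suc (Suc m). ii ! k \<le> k + 1) \<and> (\<forall>k < Suc (Suc m). jj ! k \<le> 1)
     \<and> (\<forall>k < Suc (Suc m). ii' ! k \<le> k + 1) \<and> (\<forall>k < Suc (Suc m). jj' ! k \<le> 1)
     \<and> evw (nf_word ?n ii jj) = evw (nf_word ?n ii' jj')"
    obtain a i where ai: "ii = a @ [i]" "length a = Suc m" using A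
      by (metis append_butlast_last_id length_butlast diff_Suc_1 list.size(3) nat.distinct(1))
    obtain b j where bj: "jj = b @ [j]" "length b = Suc m" using A
      by (metis append_butlast_last_id length_butlast diff_Suc_1 list.size(3) nat.distinct(1))
    obtain a' i' where ai': "ii' = a' @ [i']" "length a' = Suc m" using A
      by (metis append_butlast_last_id length_butlast diff_Suc_1 list.size(3) nat.distinct(1))
    obtain b' j' where bj': "jj' = b' @ [j']" "length b' = Suc m" using A
      by (metis append_butlast_last_id length_butlast diff_Suc_1 list.size(3) nat.distinct(1))
    have bnd: "i \<le> ?n - 1" "j \<le> 1" "i' \<le> ?n - 1" "j' \<le> 1"
      using A ai bj ai' bj' by (auto dest!: spec[of _ "Suc m"] simp: nth_append)
    have ba: "\<forall>k < Suc m. a ! k \<le> k + 1" "\<forall>k < Suc m. b ! k \<le> 1"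
      "\<forall>k < Suc m. a' ! k \<le> k + 1" "\<forall>k < Suc m. b' ! k \<le> 1"
      using A ai bj ai' bj' pref_bound[of "Suc m" a i "\<lambda>k. k + 1"] pref_bound[of "Suc m" b j "\<lambda>k. 1"]
        pref_bound[of "Suc m" a' i' "\<lambda>k. k + 1"] pref_bound[of "Suc m" b' j' "\<lambda>k. 1"] by simp_all
    define X where "X = nf_word (Suc (Suc m)) a b"
    define X' where "X' = nf_word (Suc (Suc m)) a' b'"
    have E: "evw (X @ Cw ?n j i) = evw (X' @ Cw ?n j' i')"
      using A ai bj ai' bj' nf_append[of a "Suc m" b i j] nf_append[of a' "Suc m" b' i' j']
      by (simp add: X_def X'_def)
    have fX: "evw X (int ?n) = int ?n" "evw X' (int ?n) = int ?n"
      unfolding X_def X'_def by (rule nf_fix)+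
    have "evw (Cw ?n j i) (int ?n) = evw (Cw ?n j' i') (int ?n)"
      using fun_cong[OF E, of "int ?n"] fX by (simp add: evw_append)
    hence "(if j = 0 then int ?n - int i else - int ?n + int i) = (if j' = 0 then int ?n - int i' else - int ?n + int i')"
      using ev_Cw[of ?n j i] ev_Cw[of ?n j' i'] bnd by simp
    hence ji: "i = i' \<and> j = j'" using bnd by (auto split: if_splits)
    have "evw X = evw X'"
    proof
      fix x
      have "evw (Cw ?n j i) (evw X x) = evw (Cw ?n j i) (evw X' x)"
        using fun_cong[OF E, of x] ji by (simp add: evw_append)
      hence "evw (rev (Cw ?n j i)) (evw (Cw ?n j i) (evw X x)) = evw (rev (Cw ?n j i)) (evw (Cw ?n j i) (evw X' x))"
        by simp
      then show "evw X x = evw X' x" by (simp add: evw_rev)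
    qed
    hence "a = a' \<and> b = b'" using Suc.IH ai bj ai' bj' ba unfolding X_def X'_def by blast
    then show "ii = ii' \<and> jj = jj'" using ai bj ai' bj' ji by simp
  qed
qed

theorem mainTheorem1:
  fixes n :: nat
  assumes "2 \<le> n"
  shows "\<forall>w. valid_word n w \<longrightarrow>
    (\<exists>!(ii, jj). length ii = n - 1 \<and> length jj = n - 1
        \<and> (\<forall>k < n - 1. ii ! k \<le> k + 1) \<and> (\<forall>k < n - 1. jj ! k \<le> 1)
        \<and> Dn_eq n w (nf_word n ii jj))"
proof (intro allI impI)
  fix w assume vw: "valid_word n w"
  obtain m where m: "n = Suc (Suc m)" using assms by (metis add_2_eq_Suc le_Suc_ex)
  obtain ii jj where ex: "length ii = Suc m" "length jj = Suc m"
      "\<forall>k < Suc m. ii ! k \<le> k + 1" "\<forall>k < Suc m. jj ! k \<le> 1"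
      "Dn_eq n w (nf_word n ii jj)"
    using existence[of m] vw m by blast
  show "\<exists>!(ii, jj). length ii = n - 1 \<and> length jj = n - 1
        \<and> (\<forall>k < n - 1. ii ! k \<le> k + 1) \<and> (\<forall>k < n - 1. jj ! k \<le> 1)
        \<and> Dn_eq n w (nf_word n ii jj)"
  proof (rule ex1I[of _ "(ii, jj)"])
    show "case (ii, jj) of (ii, jj) \<Rightarrow> length ii = n - 1 \<and> length jj = n - 1
        \<and> (\<forall>k < n - 1. ii ! k \<le> k + 1) \<and> (\<forall>k < n - 1. jj ! k \<le> 1)
        \<and> Dn_eq n w (nf_word n ii jj)" using ex m by simp
  next
    fix p assume P: "case p of (ii, jj) \<Rightarrow> length ii = n - 1 \<and> length jj = n - 1
        \<and> (\<forall>k < n - 1. ii ! k \<le> k + 1) \<and> (\<forall>k < n - 1. jj ! k \<le> 1)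
        \<and> Dn_eq n w (nf_word n ii jj)"
    obtain a b where p: "p = (a, b)" by (cases p)
    have Pa: "length a = Suc m" "length b = Suc m" "\<forall>k < Suc m. a ! k \<le> k + 1" "\<forall>k < Suc m. b ! k \<le> 1"
      "Dn_eq n w (nf_word n a b)" using P p m by auto
    have "Dn_eq n (nf_word n a b) (nf_word n ii jj)"
      by (rule Dn_eq.trans[OF Dn_eq.sym[OF Pa(5)] ex(5)])
    hence "evw (nf_word n a b) = evw (nf_word n ii jj)" by (rule sound)
    hence "a = ii \<and> b = jj" using uniqueness[of m] Pa ex m by blast
    then show "p = (ii, jj)" using p by simp
  qed
qed

end
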